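(* For every $\varepsilon>0$ and every instance of the scheduling problem described in the context satisfying the slack assumption with parameter $\varepsilon$, let $J$ be the set of jobs admitted by the two-threshold algorithm and $F\subseteq J$ the set of admitted jobs that it finishes (completes by their deadlines). Then \[\sum_{j\in F}w_j\ \ge\ \frac12\sum_{j\in J}w_j.\]
   Context: Problem: $m$ unrelated machines; jobs arrive online; job $j$ is revealed at release date $r_j$ with processing times $p_{ij}\in\mathbb{R}_{>0}\cup\{\infty\}$ on machines $i$, weight $w_j>0$, deadline $d_j$. The density of $j$ on $i$ is $\rho_{ij}=w_j/p_{ij}$. Preemption is allowed; the schedule is non-migratory (a job admitted to machine $i$ is processed only there and completes after receiving $p_{ij}$ units of processing). Slack assumption with parameter $\varepsilon>0$: $d_j-r_j\ge(1+\varepsilon)p_{ij}$ whenever $p_{ij}<\infty$. Two-threshold algorithm: let $\varepsilon'=\min\{\varepsilon,1\}$. A job $j$ may be admitted to a machine $i$ at a time $a_j$; it is then never processed on any other machine. Job $j$ admitted to $i$ is active on $i$ at time $\tau\ge a_j$ if its remaining processing requirement on $i$ is positive and at most $a_j+(1+\varepsilon'/2)p_{ij}-\tau$; once a job stops being active without having completed, it is discarded and never processed again. Scheduling routine: at every time $\tau$, each machine $i$ processes the active job on $i$ of highest density $\rho_{ij}$. Admission routine: it is invoked at every time $\tau$ at which a job is released or a job completes. It loops over $i=1,\dots,m$; for machine $i$, let $j^\star$ be a job of maximum density $\rho_{ij^\star}$ among the jobs with $r_{j^\star}\le\tau$ and $d_{j^\star}-\tau\ge(1+\varepsilon'/2)p_{ij^\star}$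 that have not been admitted and not previously been considered. If no job is active on $i$ at $\tau$, $j^\star$ is admitted to $i$ with $a_{j^\star}=\tau$. Otherwise, let $j$ be the active job on $i$ of highest density; $j^\star$ is admitted to $i$ with $a_{j^\star}=\tau$ if one of the following holds: (1) $p_{ij^\star}\le\frac{\varepsilon'}{2}p_{ij}$ and $\rho_{ij^\star}\ge\frac{8}{\varepsilon'}\rho_{ij}$; (2) $\frac{\varepsilon'}{2}p_{ij}<p_{ij^\star}\le p_{ij}$ and $w_{j^\star}\ge 4w_j$; (3) $p_{ij^\star}>p_{ij}$ and $\rho_{ij^\star}\ge 4\rho_{ij}$. A newly admitted job starts processing immediately. A finished job is an admitted job that completes (it does so by time $a_j+(1+\varepsilon'/2)p_{ij}\le d_j$). *)

theory Defs
  imports "HOL-Analysis.Analysis"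
begin

text \<open>
Instance: machines are the natural numbers i < m (ordered, as the admission loop
runs over i = 1..m); jobs form a finite set Jobs of an arbitrary type 'j.
elig i j encodes p_ij < infinity; in that case p i j is the (positive, finite)
processing time. A run of the two-threshold algorithm is described by
  A       : the set of admitted jobs,
  mach j  : machine to which j is admitted,
  a j     : admission time of j,
  S i t   : the job processed on machine i at time t (None = idle),
  cons t i: the job j* considered on machine i by the admission routine invoked at t.
Ties (in densities) are resolved arbitrarily: the theorem quantifies over all runs.
\<close>

definition epsp :: "real \<Rightarrow> real" where
  "epsp \<epsilon> = min \<epsilon> 1"

definition dens :: "(nat \<Rightarrow> 'j \<Rightarrow> real) \<Rightarrow> ('j \<Rightarrow> real) \<Rightarrow> nat \<Rightarrow> 'j \<Rightarrow> real" where
  "dens p w i j = w j / p i j"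

definition processed :: "(nat \<Rightarrow> real \<Rightarrow> 'j option) \<Rightarrow> nat \<Rightarrow> 'j \<Rightarrow> real \<Rightarrow> real \<Rightarrow> real" where
  "processed S i j s t = measure lborel ({x. S i x = Some j} \<inter> {s..<t})"

definition remaining ::
  "(nat \<Rightarrow> 'j \<Rightarrow> real) \<Rightarrow> ('j \<Rightarrow> nat) \<Rightarrow> ('j \<Rightarrow> real) \<Rightarrow> (nat \<Rightarrow> real \<Rightarrow> 'j option)
    \<Rightarrow> 'j \<Rightarrow> real \<Rightarrow> real" where
  "remaining p mach a S j t = p (mach j) j - processed S (mach j) j (a j) t"

definition is_active ::
  "real \<Rightarrow> (nat \<Rightarrow> 'j \<Rightarrow> real) \<Rightarrow> 'j set \<Rightarrow> ('j \<Rightarrow> nat) \<Rightarrow> ('j \<Rightarrow> real)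
    \<Rightarrow> (nat \<Rightarrow> real \<Rightarrow> 'j option) \<Rightarrow> 'j \<Rightarrow> real \<Rightarrow> bool" where
  "is_active \<epsilon> p A mach a S j t \<longleftrightarrow>
     j \<in> A \<and> a j \<le> t \<and> remaining p mach a S j t > 0 \<and>
     remaining p mach a S j t \<le> a j + (1 + epsp \<epsilon> / 2) * p (mach j) j - t"

definition adm_cond ::
  "real \<Rightarrow> (nat \<Rightarrow> 'j \<Rightarrow> real) \<Rightarrow> ('j \<Rightarrow> real) \<Rightarrow> nat \<Rightarrow> 'j \<Rightarrow> 'j \<Rightarrow> bool" where
  "adm_cond \<epsilon> p w i js k \<longleftrightarrow>
     (p i js \<le> epsp \<epsilon> / 2 * p i k \<and> dens p w i js \<ge> 8 / epsp \<epsilon> * dens p w i k) \<or>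
     (epsp \<epsilon> / 2 * p i k < p i js \<and> p i js \<le> p i k \<and> w js \<ge> 4 * w k) \<or>
     (p i js > p i k \<and> dens p w i js \<ge> 4 * dens p w i k)"

definition event_times ::
  "'j set \<Rightarrow> ('j \<Rightarrow> real) \<Rightarrow> (nat \<Rightarrow> 'j \<Rightarrow> real) \<Rightarrow> 'j set \<Rightarrow> ('j \<Rightarrow> nat) \<Rightarrow> ('j \<Rightarrow> real)
    \<Rightarrow> (nat \<Rightarrow> real \<Rightarrow> 'j option) \<Rightarrow> real set" where
  "event_times Jobs r p A mach a S =
     {t. (\<exists>j\<in>Jobs. r j = t) \<or>
         (\<exists>j\<in>A. a j \<le> t \<and> remaining p mach a S j t = 0 \<and>
                 (\<forall>x. a j \<le> x \<and> x < t \<longrightarrow> remaining p mach a S j x > 0))}"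

definition candidates ::
  "real \<Rightarrow> 'j set \<Rightarrow> (nat \<Rightarrow> 'j \<Rightarrow> bool) \<Rightarrow> (nat \<Rightarrow> 'j \<Rightarrow> real) \<Rightarrow> ('j \<Rightarrow> real) \<Rightarrow> ('j \<Rightarrow> real)
    \<Rightarrow> 'j set \<Rightarrow> ('j \<Rightarrow> real) \<Rightarrow> (real \<Rightarrow> nat \<Rightarrow> 'j option) \<Rightarrow> real \<Rightarrow> nat \<Rightarrow> 'j set" where
  "candidates \<epsilon> Jobs elig p r d A a cons t i =
     {j\<in>Jobs. elig i j \<and> r j \<le> t \<and> d j - t \<ge> (1 + epsp \<epsilon> / 2) * p i j \<and>
              \<not> (j \<in> A \<and> a j < t) \<and> (\<forall>i'<i. cons t i' \<noteq> Some j)}"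

definition two_threshold_run ::
  "real \<Rightarrow> nat \<Rightarrow> 'j set \<Rightarrow> (nat \<Rightarrow> 'j \<Rightarrow> bool) \<Rightarrow> (nat \<Rightarrow> 'j \<Rightarrow> real) \<Rightarrow> ('j \<Rightarrow> real)
    \<Rightarrow> ('j \<Rightarrow> real) \<Rightarrow> ('j \<Rightarrow> real)
    \<Rightarrow> 'j set \<Rightarrow> ('j \<Rightarrow> nat) \<Rightarrow> ('j \<Rightarrow> real) \<Rightarrow> (nat \<Rightarrow> real \<Rightarrow> 'j option)
    \<Rightarrow> (real \<Rightarrow> nat \<Rightarrow> 'j option) \<Rightarrow> bool" where
  "two_threshold_run \<epsilon> m Jobs elig p w r d A mach a S cons \<longleftrightarrow>
     A \<subseteq> Jobs \<and>
     \<comment> \<open>schedule is measurable, so processed amounts are well defined\<close>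
     (\<forall>i j. {x. S i x = Some j} \<in> sets lborel) \<and>
     \<comment> \<open>scheduling routine: each machine processes an active job of highest density, idles otherwise\<close>
     (\<forall>i<m. \<forall>t.
        (S i t = None \<longleftrightarrow> (\<forall>j. \<not> (is_active \<epsilon> p A mach a S j t \<and> mach j = i))) \<and>
        (\<forall>j. S i t = Some j \<longrightarrow>
            is_active \<epsilon> p A mach a S j t \<and> mach j = i \<and>
            (\<forall>k. is_active \<epsilon> p A mach a S k t \<and> mach k = i \<longrightarrow> dens p w i k \<le> dens p w i j))) \<and>
     (\<forall>i t. i \<ge> m \<longrightarrow> S i t = None) \<and>
     \<comment> \<open>admissions only happen in the admission routine\<close>
     (\<forall>j\<in>A. mach j < m \<and> a j \<in> event_times Jobs r p A mach a S \<and> cons (a j) (mach j) = Some j) \<and>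
     \<comment> \<open>admission routine, invoked at every release / completion time t, loop over machines i<m\<close>
     (\<forall>t\<in>event_times Jobs r p A mach a S. \<forall>i<m.
        (cons t i = None \<longleftrightarrow> candidates \<epsilon> Jobs elig p r d A a cons t i = {}) \<and>
        (\<forall>js. cons t i = Some js \<longrightarrow>
           js \<in> candidates \<epsilon> Jobs elig p r d A a cons t i \<and>
           (\<forall>k\<in>candidates \<epsilon> Jobs elig p r d A a cons t i. dens p w i k \<le> dens p w i js) \<and>
           (let Act = {k. is_active \<epsilon> p A mach a S k t \<and> mach k = i \<and> a k < t} in
              if Act = {} then (js \<in> A \<and> mach js = i \<and> a js = t)
              else (\<exists>k\<in>Act. (\<forall>k'\<in>Act. dens p w i k' \<le> dens p w i k) \<and>
                      ((js \<in> A \<and> mach js = i \<and> a js = t) \<longleftrightarrow> adm_cond \<epsilon> p w i js k)))))"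

definition finished_jobs ::
  "(nat \<Rightarrow> 'j \<Rightarrow> real) \<Rightarrow> 'j set \<Rightarrow> ('j \<Rightarrow> nat) \<Rightarrow> ('j \<Rightarrow> real) \<Rightarrow> (nat \<Rightarrow> real \<Rightarrow> 'j option) \<Rightarrow> 'j set" where
  "finished_jobs p A mach a S = {j\<in>A. \<exists>t\<ge>a j. remaining p mach a S j t = 0}"

end

theory Submission
  imports Defs
begin


lemma Ico_fmeas: "{s..<t::real} \<in> fmeasurable lborel"
  by (cases "s \<le> t") (auto simp: fmeasurable_def)

lemma proc_nonneg: "processed S i j s t \<ge> 0"
  by (simp add: processed_def)

lemma proc_empty: "t \<le> s \<Longrightarrow> processed S i j s t = 0"
  by (simp add: processed_def)

lemma proc_zero:
  assumes "\<And>x. s \<le> x \<Longrightarrow> x < t \<Longrightarrow> S i x \<noteq> Some j"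
  shows "processed S i j s t = 0"
proof -
  have "{x. S i x = Some j} \<inter> {s..<t} = {}" using assms by auto
  then show ?thesis by (simp add: processed_def)
qed

locale meas_sched =
  fixes S :: "nat \<Rightarrow> real \<Rightarrow> 'j option"
  assumes meas: "\<And>i j. {x. S i x = Some j} \<in> sets lborel"
begin

lemma proc_fmeas: "{x. S i x = Some j} \<inter> {s..<t::real} \<in> fmeasurable lborel"
  using fmeasurable_Int_fmeasurable[OF Ico_fmeas meas, of s t] by (simp add: Int_commute)

lemma proc_le:
  assumes "s \<le> t"
  shows "processed S i j s t \<le> t - s"
proof -
  have "processed S i j s t \<le> measure lborel {s..<t}"
    unfolding processed_def by (rule measure_mono_fmeasurable) (use meas Ico_fmeas in auto)
  then show ?thesis using assms by simp
qed

lemma proc_add: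
  assumes "s \<le> u" "u \<le> t"
  shows "processed S i j s t = processed S i j s u + processed S i j u t"
proof -
  let ?X = "{x. S i x = Some j}"
  have "?X \<inter> {s..<t} = (?X \<inter> {s..<u}) \<union> (?X \<inter> {u..<t})" using assms by auto
  moreover have "measure lborel ((?X \<inter> {s..<u}) \<union> (?X \<inter> {u..<t})) =
     measure lborel (?X \<inter> {s..<u}) + measure lborel (?X \<inter> {u..<t})"
    apply (rule measure_Union)
    using proc_fmeas[of i j s u] proc_fmeas[of i j u t] by (auto simp: fmeasurable_def less_top)
  ultimately show ?thesis by (simp add: processed_def)
qed

lemma proc_mono:
  assumes "u \<le> t"
  shows "processed S i j s u \<le> processed S i j s t"
proof (cases "s \<le> u")
  case True then show ?thesis using proc_add[OF True assms] proc_nonneg[of S i j u t] by simp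
next
  case False then show ?thesis using proc_nonneg by (simp add: proc_empty)
qed

lemma proc_lip:
  assumes "s \<le> u" "u \<le> t"
  shows "processed S i j s t - processed S i j s u \<le> t - u"
  using proc_add[OF assms] proc_le[OF assms(2)] by simp

lemma proc_cont: "continuous_on {s..} (\<lambda>t. processed S i j s t)"
proof -
  have "1-lipschitz_on {s..} (\<lambda>t. processed S i j s t)"
  proof (rule lipschitz_onI)
    fix x y assume "x \<in> {s..}" "y \<in> {s..}"
    then have sx: "s \<le> x" and sy: "s \<le> y" by auto
    show "dist (processed S i j s x) (processed S i j s y) \<le> 1 * dist x y"
    proof (cases "x \<le> y")
      case True
      have "processed S i j s y - processed S i j s x \<le> y - x" by (rule proc_lip[OF sx True])
      moreover have "processed S i j s x \<le> processed S i j s y" by (rule proc_mono[OF True])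
      ultimately show ?thesis using True by (simp add: dist_real_def)
    next
      case False
      then have F: "y \<le> x" by simp
      have "processed S i j s x - processed S i j s y \<le> x - y" by (rule proc_lip[OF sy F])
      moreover have "processed S i j s y \<le> processed S i j s x" by (rule proc_mono[OF F])
      ultimately show ?thesis using F by (simp add: dist_real_def)
    qed
  qed simp
  then show ?thesis by (rule lipschitz_on_continuous_on)
qed

end


lemma epsp_pos: "\<epsilon> > 0 \<Longrightarrow> epsp \<epsilon> > 0" by (simp add: epsp_def)
lemma epsp_le1: "epsp \<epsilon> \<le> 1" by (simp add: epsp_def)

lemma adm_dens:
  assumes "adm_cond \<epsilon> p w i y k" "p i y > 0" "p i k > 0" "w k > 0" "\<epsilon> > 0"
  shows "4 * dens p w i k \<le> dens p w i y"
proof -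
  have e: "0 < epsp \<epsilon>" "epsp \<epsilon> \<le> 1" using epsp_pos[OF assms(5)] epsp_le1 by auto
  have dk: "dens p w i k > 0" using assms by (simp add: dens_def)
  consider (c1) "dens p w i y \<ge> 8 / epsp \<epsilon> * dens p w i k"
    | (c2) "p i y \<le> p i k" "w y \<ge> 4 * w k" | (c3) "dens p w i y \<ge> 4 * dens p w i k"
    using assms(1) unfolding adm_cond_def by auto
  then show ?thesis
  proof cases
    case c1
    have "8 / epsp \<epsilon> \<ge> 4" using e by (simp add: field_simps)
    then have "4 * dens p w i k \<le> 8 / epsp \<epsilon> * dens p w i k"
      using dk by (intro mult_right_mono) auto
    then show ?thesis using c1 by linarith
  next
    case c2
    have "4 * w k / p i k \<le> 4 * w k / p i y"
      using c2 assms by (intro divide_left_mono) auto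
    also have "\<dots> \<le> w y / p i y" using c2 assms by (intro divide_right_mono) auto
    finally show ?thesis by (simp add: dens_def)
  qed
qed

locale TT = meas_sched S for S :: "nat \<Rightarrow> real \<Rightarrow> 'j option" +
  fixes \<epsilon> :: real and m :: nat and Jobs :: "'j set"
    and elig :: "nat \<Rightarrow> 'j \<Rightarrow> bool" and p :: "nat \<Rightarrow> 'j \<Rightarrow> real"
    and w r d :: "'j \<Rightarrow> real"
    and A :: "'j set" and mach :: "'j \<Rightarrow> nat" and a :: "'j \<Rightarrow> real"
    and cons :: "real \<Rightarrow> nat \<Rightarrow> 'j option"
  assumes eps_pos: "\<epsilon> > 0"
    and fin: "finite Jobs"
    and w_pos: "\<And>j. j \<in> Jobs \<Longrightarrow> w j > 0"
    and p_pos: "\<And>i j. i < m \<Longrightarrow> j \<in> Jobs \<Longrightarrow> elig i j \<Longrightarrow> p i j > 0"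
    and run: "two_threshold_run \<epsilon> m Jobs elig p w r d A mach a S cons"
begin

abbreviation "act j t \<equiv> is_active \<epsilon> p A mach a S j t"
abbreviation "P j t \<equiv> processed S (mach j) j (a j) t"
abbreviation "rho j \<equiv> dens p w (mach j) j"
abbreviation "pp j \<equiv> p (mach j) j"
abbreviation "del \<equiv> epsp \<epsilon> / 2"
abbreviation "ET \<equiv> event_times Jobs r p A mach a S"
abbreviation "cand \<equiv> candidates \<epsilon> Jobs elig p r d A a cons"

lemma del_pos: "del > 0" and del_le: "del \<le> 1/2"
  using epsp_pos[OF eps_pos] epsp_le1[of \<epsilon>] by auto

lemma A_sub: "A \<subseteq> Jobs" using run by (simp add: two_threshold_run_def)
lemma finA: "finite A" using A_sub fin finite_subset by blast

lemma sched: "i < m \<Longrightarrow> (S i t = None \<longleftrightarrow> (\<forall>j. \<not> (act j t \<and> mach j = i)))"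
  using run unfolding two_threshold_run_def by blast

lemma S_some:
  assumes "S i t = Some j"
  shows "act j t \<and> mach j = i \<and> i < m \<and> (\<forall>k. act k t \<and> mach k = i \<longrightarrow> dens p w i k \<le> dens p w i j)"
proof -
  have "i < m" using assms run unfolding two_threshold_run_def by (metis not_le option.distinct(1))
  then show ?thesis using assms run unfolding two_threshold_run_def by blast
qed

lemma admitted: "j \<in> A \<Longrightarrow> mach j < m \<and> a j \<in> ET \<and> cons (a j) (mach j) = Some j"
  using run unfolding two_threshold_run_def by blast

lemma routine:
  assumes "t \<in> ET" "i < m" "cons t i = Some js"
  shows "js \<in> cand t i \<and>
           (let Act = {k. act k t \<and> mach k = i \<and> a k < t} in
              if Act = {} then (js \<in> A \<and> mach js = i \<and> a js = t)
              else (\<exists>k\<in>Act. (\<forall>k'\<in>Act. dens p w i k' \<le> dens p w i k) \<and>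
                      ((js \<in> A \<and> mach js = i \<and> a js = t) \<longleftrightarrow> adm_cond \<epsilon> p w i js k)))"
  using run assms unfolding two_threshold_run_def by blast

lemma act_def': "act j t \<longleftrightarrow> j \<in> A \<and> a j \<le> t \<and> 0 < pp j - P j t \<and> pp j - P j t \<le> a j + (1 + del) * pp j - t"
  by (simp add: is_active_def remaining_def)

lemma act_A: "act j t \<Longrightarrow> j \<in> A \<and> a j \<le> t" by (simp add: is_active_def)

lemma adm_info: "j \<in> A \<Longrightarrow> j \<in> Jobs \<and> elig (mach j) j"
proof -
  assume j: "j \<in> A"
  from admitted[OF j] routine[of "a j" "mach j" j] have "j \<in> cand (a j) (mach j)" by blast
  then show ?thesis by (simp add: candidates_def)
qed

lemma pp_pos: "j \<in> A \<Longrightarrow> pp j > 0"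
  using adm_info admitted p_pos by blast
lemma w_posA: "j \<in> A \<Longrightarrow> w j > 0"
  using adm_info w_pos by blast
lemma rho_pos: "j \<in> A \<Longrightarrow> rho j > 0"
  using pp_pos w_posA by (simp add: dens_def)
lemma w_eq: assumes "j \<in> A" shows "w j = rho j * pp j"
  using pp_pos[OF assms] by (simp add: dens_def)

lemma a_inj: "j \<in> A \<Longrightarrow> k \<in> A \<Longrightarrow> mach j = mach k \<Longrightarrow> a j = a k \<Longrightarrow> j = k"
  using admitted by (metis option.inject)

lemma adm_top:
  assumes y: "y \<in> A" and x: "act x (a y)" "mach x = mach y" "a x < a y"
  shows "\<exists>k. act k (a y) \<and> mach k = mach y \<and> a k < a y \<and>
     (\<forall>k'. act k' (a y) \<and> mach k' = mach y \<and> a k' < a y \<longrightarrow> dens p w (mach y) k' \<le> dens p w (mach y) k) \<and>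
     adm_cond \<epsilon> p w (mach y) y k"
proof -
  let ?Act = "{k. act k (a y) \<and> mach k = mach y \<and> a k < a y}"
  have ne: "?Act \<noteq> {}" using x by blast
  have R: "let Act = ?Act in if Act = {} then (y \<in> A \<and> mach y = mach y \<and> a y = a y)
              else (\<exists>k\<in>Act. (\<forall>k'\<in>Act. dens p w (mach y) k' \<le> dens p w (mach y) k) \<and>
                      ((y \<in> A \<and> mach y = mach y \<and> a y = a y) \<longleftrightarrow> adm_cond \<epsilon> p w (mach y) y k))"
    using admitted[OF y] routine[of "a y" "mach y" y] by blast
  then have "\<exists>k\<in>?Act. (\<forall>k'\<in>?Act. dens p w (mach y) k' \<le> dens p w (mach y) k) \<and>
                      ((y \<in> A \<and> mach y = mach y \<and> a y = a y) \<longleftrightarrow> adm_cond \<epsilon> p w (mach y) y k)"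
    using ne unfolding Let_def by presburger
  then obtain k where "k \<in> ?Act" "\<forall>k'\<in>?Act. dens p w (mach y) k' \<le> dens p w (mach y) k"
     "adm_cond \<epsilon> p w (mach y) y k"
    using y by auto
  then show ?thesis by blast
qed

lemma P_start: "P j (a j) = 0" by (simp add: proc_empty)

lemma act_down:
  assumes "act j t" "a j \<le> s" "s \<le> t"
  shows "act j s"
proof -
  have "P j s \<le> P j t" using proc_mono assms by blast
  moreover have "P j t - P j s \<le> t - s" using proc_lip assms by blast
  ultimately show ?thesis using assms unfolding act_def' by auto
qed

lemma newer_denser:
  assumes "act x t" "act y t" "mach x = mach y" "a x < a y"
  shows "4 * rho x \<le> rho y"
proof -
  have y: "y \<in> A" "a y \<le> t" using act_A assms by auto
  have "act x (a y)" using act_down[OF assms(1)] assms y by auto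
  from adm_top[OF y(1) this assms(3,4)] obtain k where
    k: "act k (a y)" "mach k = mach y" and mx: "dens p w (mach y) x \<le> dens p w (mach y) k"
    and ad: "adm_cond \<epsilon> p w (mach y) y k"
    using \<open>act x (a y)\<close> assms by blast
  have kA: "k \<in> A" using k act_A by auto
  have "4 * dens p w (mach y) k \<le> dens p w (mach y) y"
    using adm_dens[OF ad] pp_pos[OF y(1)] pp_pos[OF kA] w_posA[OF kA] eps_pos k by auto
  then show ?thesis using mx assms(3) by simp
qed

lemma max_unique:
  assumes "act x t" "act y t" "mach x = mach y" "rho x = rho y"
  shows "x = y"
proof (rule ccontr)
  assume ne: "x \<noteq> y"
  have A: "x \<in> A" "y \<in> A" using assms act_A by auto
  have "a x \<noteq> a y" using a_inj A assms ne by blast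
  then consider "a x < a y" | "a y < a x" by linarith
  then show False
  proof cases
    case 1 then show False using newer_denser[OF assms(1,2,3) 1] assms rho_pos[OF A(1)] by simp
  next
    case 2 then show False using newer_denser[OF assms(2,1) _ 2] assms rho_pos[OF A(2)] by simp
  qed
qed

end

context TT begin
definition child :: "'j \<Rightarrow> 'j \<Rightarrow> bool" where
  "child j k \<longleftrightarrow> j \<in> A \<and> k \<in> A \<and> mach j = mach k \<and> a j < a k \<and> act j (a k) \<and>
     (\<forall>x. act x (a k) \<and> mach x = mach k \<and> a x < a k \<longrightarrow> rho x \<le> rho j)"

abbreviation "desc \<equiv> child\<^sup>+\<^sup>+"

lemma child_basic: "child j k \<Longrightarrow> j \<in> A \<and> k \<in> A \<and> mach j = mach k \<and> a j < a k"
  by (simp add: child_def)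

lemma desc_basic: "desc j k \<Longrightarrow> j \<in> A \<and> k \<in> A \<and> mach j = mach k \<and> a j < a k"
  by (induction rule: tranclp_induct) (auto dest: child_basic)
lemma rdesc_basic: "child\<^sup>*\<^sup>* j k \<Longrightarrow> j = k \<or> (j \<in> A \<and> k \<in> A \<and> mach j = mach k \<and> a j < a k)"
  by (metis desc_basic rtranclpD)
lemma child_max:
  assumes "child j k" "act x (a k)" "mach x = mach k" "a x < a k"
  shows "rho x \<le> rho j"
proof -
  have H: "\<forall>x. act x (a k) \<and> mach x = mach k \<and> a x < a k \<longrightarrow> rho x \<le> rho j"
    using assms(1) unfolding child_def by (elim conjE)
  have I: "act x (a k) \<and> mach x = mach k \<and> a x < a k \<longrightarrow> rho x \<le> rho j" using H by (rule spec)
  show ?thesis using assms(2-4) by (intro mp[OF I] conjI)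
qed
lemma child_act: "child j k \<Longrightarrow> act j (a k)"
  unfolding child_def by (elim conjE)

lemma child_unique: "child j k \<Longrightarrow> child j' k \<Longrightarrow> j = j'"
proof -
  assume c: "child j k" "child j' k"
  have f: "act j (a k)" "act j' (a k)" "mach j = mach k" "mach j' = mach k" "a j < a k" "a j' < a k"
    using c child_act child_basic by blast+
  have "rho j \<le> rho j'" using child_max[OF c(2) f(1,3,5)] .
  moreover have "rho j' \<le> rho j" using child_max[OF c(1) f(2,4,6)] .
  ultimately have "rho j = rho j'" by simp
  then show "j = j'" using max_unique[OF f(1,2)] f by simp
qed

lemma child_adm:
  assumes c: "child j k"
  shows "adm_cond \<epsilon> p w (mach k) k j"
proof -
  have cb: "j \<in> A" "k \<in> A" "mach j = mach k" "a j < a k" using child_basic[OF c] by simp_all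
  have ca: "act j (a k)" using child_act[OF c] .
  from adm_top[OF cb(2) ca cb(3) cb(4)] obtain t where
    t: "act t (a k)" "mach t = mach k" "a t < a k"
      "\<forall>k'. act k' (a k) \<and> mach k' = mach k \<and> a k' < a k \<longrightarrow> dens p w (mach k) k' \<le> dens p w (mach k) t"
      "adm_cond \<epsilon> p w (mach k) k t" by blast
  have "act j (a k) \<and> mach j = mach k \<and> a j < a k \<longrightarrow> dens p w (mach k) j \<le> dens p w (mach k) t"
    using t(4) by (rule spec)
  then have "dens p w (mach k) j \<le> dens p w (mach k) t" using ca cb by blast
  then have 1: "rho j \<le> rho t" using cb(3) t(2) by simp
  have 2: "rho t \<le> rho j" using child_max[OF c t(1,2,3)] .
  have "t = j" using max_unique[OF t(1) ca] t(2) cb(3) 1 2 by simp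
  then show ?thesis using t(5) by simp
qed

lemma card_less:
  assumes "k0 \<in> A" "a k0 < a k"
  shows "card {x\<in>A. a x < a k0} < card {x\<in>A. a x < a k}"
  by (rule psubset_card_mono) (use finA assms in auto)

lemma desc_active:
  assumes "act j (a k)" "k \<in> A" "mach j = mach k" "a j < a k"
  shows "desc j k"
  using assms
proof (induction "card {x\<in>A. a x < a k}" arbitrary: k rule: less_induct)
  case less
  from adm_top[OF less.prems(2,1,3,4)] obtain k0 where
    t: "act k0 (a k)" "mach k0 = mach k" "a k0 < a k"
      "\<forall>k'. act k' (a k) \<and> mach k' = mach k \<and> a k' < a k \<longrightarrow> dens p w (mach k) k' \<le> dens p w (mach k) k0"
    by blast
  have k0A: "k0 \<in> A" using act_A[OF t(1)] by simp
  have jA: "j \<in> A" using act_A[OF less.prems(1)] by simp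
  have ch: "child k0 k" unfolding child_def
  proof (intro conjI allI impI)
    fix x assume x: "act x (a k) \<and> mach x = mach k \<and> a x < a k"
    have "act x (a k) \<and> mach x = mach k \<and> a x < a k \<longrightarrow> dens p w (mach k) x \<le> dens p w (mach k) k0"
      using t(4) by (rule spec)
    then show "rho x \<le> rho k0" using x t(2) by simp
  qed (use t k0A less.prems in simp_all)
  have "act j (a k) \<and> mach j = mach k \<and> a j < a k \<longrightarrow> dens p w (mach k) j \<le> dens p w (mach k) k0"
    using t(4) by (rule spec)
  then have rj: "rho j \<le> rho k0" using less.prems t(2) by simp
  show ?case
  proof (cases "k0 = j")
    case True then show ?thesis using ch by simp
  next
    case False
    have "a k0 \<noteq> a j"
    proof
      assume "a k0 = a j"
      then have "k0 = j" using a_inj[OF k0A jA] t(2) less.prems(3) by simp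
      then show False using False by simp
    qed
    moreover have "\<not> a k0 < a j"
    proof
      assume lt: "a k0 < a j"
      have "mach k0 = mach j" using t(2) less.prems(3) by simp
      then have "4 * rho k0 \<le> rho j" using newer_denser[OF t(1) less.prems(1) _ lt] by simp
      then show False using rj rho_pos[OF k0A] by simp
    qed
    ultimately have lt: "a j < a k0" by simp
    have aj: "act j (a k0)" using act_down[OF less.prems(1)] lt t(3) by simp
    have mj: "mach j = mach k0" using t(2) less.prems(3) by simp
    have "desc j k0"
      using less.hyps[OF card_less[OF k0A t(3)] aj k0A mj lt] .
    then show ?thesis using ch by (rule tranclp.trancl_into_trancl)
  qed
qed

lemma S_desc:
  assumes "act j t" "S (mach j) t = Some k" "k \<noteq> j"
  shows "desc j k"
proof -
  from S_some[OF assms(2)] have k: "act k t" "mach k = mach j"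
    and H: "\<forall>k'. act k' t \<and> mach k' = mach j \<longrightarrow> dens p w (mach j) k' \<le> dens p w (mach j) k"
    by blast+
  have "act j t \<and> mach j = mach j \<longrightarrow> dens p w (mach j) j \<le> dens p w (mach j) k"
    using H by (rule spec)
  then have r: "rho j \<le> rho k" using assms(1) k(2) by simp
  have jA: "j \<in> A" using act_A[OF assms(1)] by simp
  have kA: "k \<in> A" using act_A[OF k(1)] by simp
  have "a k \<noteq> a j"
  proof
    assume "a k = a j"
    then have "k = j" using a_inj[OF kA jA] k(2) by simp
    then show False using assms(3) by simp
  qed
  moreover have "\<not> a k < a j"
  proof
    assume lt: "a k < a j"
    then have "4 * rho k \<le> rho j" using newer_denser[OF k(1) assms(1) k(2) lt] by simp
    then show False using r rho_pos[OF kA] by simp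
  qed
  ultimately have lt: "a j < a k" by simp
  have "act j (a k)" using act_down[OF assms(1)] lt act_A[OF k(1)] by simp
  then show ?thesis using desc_active[OF _ kA _ lt] k(2) by simp
qed


lemma act_proc: "S i x = Some j \<Longrightarrow> act j x \<and> mach j = i" using S_some by blast

lemma P_le:
  assumes j: "j \<in> A"
  shows "P j t \<le> pp j"
proof (rule ccontr)
  assume "\<not> P j t \<le> pp j"
  then have gt: "P j t > pp j" by simp
  have at: "a j \<le> t"
  proof (rule ccontr)
    assume "\<not> a j \<le> t" then have "P j t = 0" by (simp add: proc_empty)
    then show False using gt pp_pos[OF j] by simp
  qed
  have cont: "continuous_on {a j..t} (\<lambda>t. P j t)"
    by (rule continuous_on_subset[OF proc_cont]) auto
  have "\<exists>u\<ge>a j. u \<le> t \<and> P j u = pp j"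
    by (rule IVT'[of "\<lambda>t. P j t"]) (use cont at gt P_start pp_pos[OF j] in simp_all)
  then obtain u where u: "a j \<le> u" "u \<le> t" "P j u = pp j" by blast
  have "processed S (mach j) j u t = 0"
  proof (rule proc_zero)
    fix x assume x: "u \<le> x" "x < t"
    show "S (mach j) x \<noteq> Some j"
    proof
      assume "S (mach j) x = Some j"
      then have "act j x" using act_proc by blast
      then have "P j x < pp j" unfolding act_def' by simp
      moreover have "P j u \<le> P j x" using proc_mono x by simp
      ultimately show False using u by simp
    qed
  qed
  then have "P j t = P j u" using proc_add[of "a j" u t] u by simp
  then show False using gt u by simp
qed

end 
context TT begin

definition Tend :: real where
  "Tend = Max (insert 0 ((\<lambda>j. a j + (1 + del) * pp j) ` A))"

lemma C_le_Tend: "j \<in> A \<Longrightarrow> a j + (1 + del) * pp j \<le> Tend"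
  unfolding Tend_def by (rule Max_ge) (use finA in auto)

definition proc :: "'j \<Rightarrow> real" where
  "proc k = processed S (mach k) k (a k) Tend"

abbreviation "F \<equiv> finished_jobs p A mach a S"

definition Desc :: "'j \<Rightarrow> 'j set" where "Desc j = {k. desc j k}"

lemma Desc_sub: "Desc j \<subseteq> A" unfolding Desc_def using desc_basic by blast
lemma Desc_fin: "finite (Desc j)" using Desc_sub finA finite_subset by blast

lemma unfin_pos:
  assumes "j \<in> A" "j \<notin> F" "a j \<le> t"
  shows "P j t < pp j"
proof -
  have "remaining p mach a S j t \<noteq> 0" using assms unfolding finished_jobs_def by blast
  then show ?thesis using P_le[OF assms(1), of t] unfolding remaining_def by simp
qed

lemma unfinished:
  assumes jA: "j \<in> A" and jF: "j \<notin> F"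
  shows "del * pp j \<le> (\<Sum>k\<in>Desc j. proc k)"
proof -
  define C where "C = a j + (1 + del) * pp j"
  define i where "i = mach j"
  have pj: "pp j > 0" using pp_pos[OF jA] .
  have dp: "del > 0" using del_pos .
  have aC: "a j \<le> C" unfolding C_def using pj dp by (simp add: add_nonneg_nonneg)
  have cont: "continuous_on {a j..C} (\<lambda>t. t - P j t)"
    by (intro continuous_intros continuous_on_subset[OF proc_cont]) auto
  have PC: "P j C \<le> pp j" using P_le[OF jA] .
  have "\<exists>D\<ge>a j. D \<le> C \<and> D - P j D = a j + del * pp j"
    by (rule IVT'[of "\<lambda>t. t - P j t"]) (use cont aC PC P_start pj dp in \<open>simp_all add: C_def algebra_simps\<close>)
  then obtain D where D: "a j \<le> D" "D \<le> C" "D - P j D = a j + del * pp j" by blast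
  have actx: "act j x" if x: "a j \<le> x" "x < D" for x
  proof -
    have "P j D - P j x \<le> D - x" using proc_lip x by simp
    moreover have "P j x < pp j" using unfin_pos[OF jA jF x(1)] .
    ultimately show ?thesis unfolding act_def' using jA x D by (simp add: algebra_simps)
  qed
  have im: "i < m" unfolding i_def using admitted[OF jA] by simp
  let ?L = "{x. S i x = Some j} \<inter> {a j..<D}"
  let ?U = "\<Union>k\<in>Desc j. {x. S (mach k) x = Some k} \<inter> {a k..<Tend}"
  have cover: "{a j..<D} \<subseteq> ?L \<union> ?U"
  proof
    fix x assume "x \<in> {a j..<D}"
    then have x: "a j \<le> x" "x < D" by auto
    have ax: "act j x" using actx[OF x] .
    have "S i x \<noteq> None" using sched[OF im, of x] ax i_def by blast
    then obtain k where k: "S i x = Some k" by blast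
    show "x \<in> ?L \<union> ?U"
    proof (cases "k = j")
      case True then show ?thesis using k x by simp
    next
      case False
      have dk: "desc j k" using S_desc[OF ax] k False i_def by simp
      have mk: "mach k = i" using desc_basic[OF dk] i_def by simp
      have "act k x" using act_proc[OF k] by simp
      then have "a k \<le> x" using act_A by simp
      moreover have "x < Tend" using x D C_le_Tend[OF jA] C_def by simp
      ultimately have "x \<in> {x. S (mach k) x = Some k} \<inter> {a k..<Tend}" using k mk by simp
      moreover have "k \<in> Desc j" using dk Desc_def by simp
      ultimately show ?thesis by blast
    qed
  qed
  have fL: "?L \<in> fmeasurable lborel" using proc_fmeas .
  have fU: "?U \<in> fmeasurable lborel"
    by (rule fmeasurable.finite_UN) (use Desc_fin proc_fmeas in auto)
  have "D - a j = measure lborel {a j..<D}" using D by simp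
  also have "\<dots> \<le> measure lborel (?L \<union> ?U)"
    by (rule measure_mono_fmeasurable[OF cover]) (use fL fU in auto)
  also have "\<dots> \<le> measure lborel ?L + measure lborel ?U"
    by (rule measure_Un_le) (use fL fU in auto)
  also have "measure lborel ?L = P j D" unfolding processed_def i_def by simp
  also have "measure lborel ?U \<le> (\<Sum>k\<in>Desc j. measure lborel ({x. S (mach k) x = Some k} \<inter> {a k..<Tend}))"
    by (rule measure_UNION_le) (use Desc_fin proc_fmeas fmeasurableD in blast)+
  also have "\<dots> = (\<Sum>k\<in>Desc j. proc k)" unfolding proc_def processed_def by simp
  finally show ?thesis using D by simp
qed

end 
context TT begin

definition Ch :: "'j \<Rightarrow> 'j set" where "Ch j = {c. child j c}"
definition sub :: "'j \<Rightarrow> 'j set" where "sub j = {k. child\<^sup>*\<^sup>* j k}"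

lemma Ch_sub: "Ch j \<subseteq> A" unfolding Ch_def using child_basic by blast
lemma Ch_fin: "finite (Ch j)" using Ch_sub finA finite_subset by blast

lemma sub_eq: "sub j = insert j (Desc j)"
  unfolding sub_def Desc_def by (auto dest: rtranclpD tranclp_into_rtranclp)

lemma sub_fin: "finite (sub j)" using sub_eq Desc_fin by simp

lemma not_in_Desc: "j \<notin> Desc j" unfolding Desc_def using desc_basic by blast

lemma Desc_decomp: "Desc j = (\<Union>c\<in>Ch j. sub c)"
proof
  show "Desc j \<subseteq> (\<Union>c\<in>Ch j. sub c)"
  proof
    fix k assume "k \<in> Desc j"
    then have "desc j k" unfolding Desc_def by simp
    then obtain c where "child j c" "child\<^sup>*\<^sup>* c k" using tranclpD by metis
    then show "k \<in> (\<Union>c\<in>Ch j. sub c)" unfolding Ch_def sub_def by blast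
  qed
next
  show "(\<Union>c\<in>Ch j. sub c) \<subseteq> Desc j"
  proof
    fix k assume "k \<in> (\<Union>c\<in>Ch j. sub c)"
    then obtain c where "child j c" "child\<^sup>*\<^sup>* c k" unfolding Ch_def sub_def by blast
    then have "desc j k" by (rule rtranclp_into_tranclp2)
    then show "k \<in> Desc j" unfolding Desc_def by simp
  qed
qed

lemma comparable:
  assumes "child\<^sup>*\<^sup>* v x"
  shows "\<forall>u. child\<^sup>*\<^sup>* u x \<longrightarrow> child\<^sup>*\<^sup>* u v \<or> child\<^sup>*\<^sup>* v u"
  using assms
proof (induction rule: rtranclp_induct)
  case base then show ?case by simp
next
  case (step y z)
  show ?case
  proof (intro allI impI)
    fix u assume "child\<^sup>*\<^sup>* u z"
    then show "child\<^sup>*\<^sup>* u v \<or> child\<^sup>*\<^sup>* v u"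
    proof (cases rule: rtranclp.cases)
      case rtrancl_refl
      then have "child\<^sup>*\<^sup>* v u" using step(1,2) by simp
      then show ?thesis by simp
    next
      case (rtrancl_into_rtrancl y')
      then have "y' = y" using child_unique step(2) by blast
      then have "child\<^sup>*\<^sup>* u y" using rtrancl_into_rtrancl by simp
      then show ?thesis using step(3) by blast
    qed
  qed
qed

lemma sub_disj:
  assumes c1: "child j c1" and c2: "child j c2" and ne: "c1 \<noteq> c2"
  shows "sub c1 \<inter> sub c2 = {}"
proof (rule ccontr)
  assume "sub c1 \<inter> sub c2 \<noteq> {}"
  then obtain x where x: "child\<^sup>*\<^sup>* c1 x" "child\<^sup>*\<^sup>* c2 x" unfolding sub_def by blast
  have gen: False if d: "child\<^sup>*\<^sup>* u v" "u \<noteq> v" "child j u" "child j v" for u v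
  proof -
    obtain y where y: "child\<^sup>*\<^sup>* u y" "child y v"
      using d(1,2) by (cases rule: rtranclp.cases) auto
    have "y = j" using child_unique[OF y(2) d(4)] .
    then have "child\<^sup>*\<^sup>* u j" using y by simp
    then have "u = j \<or> a u < a j" using rdesc_basic by blast
    moreover have "a j < a u" using child_basic[OF d(3)] by simp
    ultimately show False by auto
  qed
  from comparable[OF x(2)] x(1) have "child\<^sup>*\<^sup>* c1 c2 \<or> child\<^sup>*\<^sup>* c2 c1" by blast
  then show False using gen c1 c2 ne by metis
qed

definition sg :: "'j \<Rightarrow> real" where "sg k = (if k \<in> F then 1 else -1)"
definition B :: "'j \<Rightarrow> real" where "B j = (\<Sum>k\<in>sub j. sg k * w k)"
definition Z :: "'j \<Rightarrow> real" where "Z j = (\<Sum>k\<in>Desc j. proc k)"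

lemma sum_sub: "(\<Sum>k\<in>sub j. f k) = f j + (\<Sum>c\<in>Ch j. \<Sum>k\<in>sub c. f k)"
proof -
  have "(\<Sum>k\<in>sub j. f k) = f j + (\<Sum>k\<in>Desc j. f k)"
    unfolding sub_eq using Desc_fin not_in_Desc by simp
  also have "(\<Sum>k\<in>Desc j. f k) = (\<Sum>c\<in>Ch j. \<Sum>k\<in>sub c. f k)"
    unfolding Desc_decomp
    by (rule sum.UNION_disjoint) (use Ch_fin sub_fin sub_disj in \<open>auto simp: Ch_def\<close>)
  finally show ?thesis .
qed

lemma B_rec: "B j = sg j * w j + (\<Sum>c\<in>Ch j. B c)"
  unfolding B_def by (rule sum_sub)

lemma Z_rec: "Z j = (\<Sum>c\<in>Ch j. proc c + Z c)"
proof -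
  have "Z j = (\<Sum>c\<in>Ch j. \<Sum>k\<in>sub c. proc k)"
    unfolding Z_def Desc_decomp
    by (rule sum.UNION_disjoint) (use Ch_fin sub_fin sub_disj in \<open>auto simp: Ch_def\<close>)
  also have "\<dots> = (\<Sum>c\<in>Ch j. proc c + Z c)"
    unfolding Z_def using sum_sub[of proc] by (metis Desc_fin not_in_Desc sub_eq sum.insert)
  finally show ?thesis .
qed

lemma proc_nn: "proc k \<ge> 0" unfolding proc_def by (rule proc_nonneg)
lemma proc_le_pp: "k \<in> A \<Longrightarrow> proc k \<le> pp k" unfolding proc_def by (rule P_le)
lemma Z_nn: "Z j \<ge> 0" unfolding Z_def by (rule sum_nonneg) (use proc_nn in auto)

end 
lemma arith_small:
  fixes d p Z r :: real
  assumes "0 < d" "d \<le> 1/2" "d * p \<le> Z" "r > 0" "p > 0"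
  shows "2 * (r * p) + r * Z \<le> (4 / d) * (r * Z)"
proof -
  have k: "4 / d - 1 \<ge> 0" using assms by (simp add: field_simps)
  have "(4 / d - 1) * (d * p) \<le> (4 / d - 1) * Z" using mult_left_mono[OF assms(3) k] .
  moreover have "(4 / d - 1) * (d * p) = (4 - d) * p" using assms(1) by (simp add: field_simps)
  ultimately have "(4 - d) * p \<le> (4 / d - 1) * Z" by simp
  moreover have "2 * p \<le> (4 - d) * p" using assms by simp
  ultimately have "2 * p \<le> (4 / d - 1) * Z" by simp
  then have "r * (2 * p) \<le> r * ((4 / d - 1) * Z)" using assms(4) by simp
  then show ?thesis by (simp add: algebra_simps)
qed

context TT begin

lemma child_props:
  assumes c: "child j c"
  shows "4 * rho j \<le> rho c \<and> ((4 / del) * rho j \<le> rho c \<or> 4 * w j \<le> w c)"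
proof -
  have cb: "j \<in> A" "c \<in> A" "mach j = mach c" using child_basic[OF c] by simp_all
  have ad0: "adm_cond \<epsilon> p w (mach c) c j" using child_adm[OF c] .
  have ad: "adm_cond \<epsilon> p w (mach j) c j" using ad0 cb(3) by (simp only:)
  have pc_eq: "p (mach j) c = pp c" using cb(3) by (simp only:)
  have rc_eq: "dens p w (mach j) c = rho c" using cb(3) by (simp only:)
  have pc: "p (mach j) c > 0" using pp_pos[OF cb(2)] pc_eq by (simp only:)
  have pj: "p (mach j) j > 0" using pp_pos[OF cb(1)] .
  have wj: "w j > 0" using w_posA[OF cb(1)] .
  have 1: "4 * rho j \<le> rho c" using adm_dens[OF ad pc pj wj eps_pos] rc_eq by (simp only:)
  have e: "epsp \<epsilon> > 0" using epsp_pos[OF eps_pos] .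
  have 2: "(4 / del) * rho j \<le> rho c \<or> 4 * w j \<le> w c"
  proof -
    consider (c1) "dens p w (mach j) c \<ge> 8 / epsp \<epsilon> * dens p w (mach j) j"
      | (c2) "w c \<ge> 4 * w j"
      | (c3) "p (mach j) c > p (mach j) j"
      using ad unfolding adm_cond_def by blast
    then show ?thesis
    proof cases
      case c1
      have "4 / del = 8 / epsp \<epsilon>" using e by (simp add: field_simps)
      then have "(4 / del) * rho j \<le> rho c" using c1 rc_eq by (simp only:)
      then show ?thesis by (rule disjI1)
    next
      case c2 then show ?thesis by (rule disjI2)
    next
      case c3
      then have pjc: "pp j \<le> pp c" using pc_eq by linarith
      have "4 * w j = (4 * rho j) * pp j" using w_eq[OF cb(1)] by simp
      also have "\<dots> \<le> rho c * pp c"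
        by (rule mult_mono[OF 1 pjc]) (use rho_pos[OF cb(2)] pj in simp_all)
      also have "\<dots> = w c" using w_eq[OF cb(2)] by simp
      finally show ?thesis by (rule disjI2)
    qed
  qed
  show ?thesis using 1 2 by (rule conjI)
qed

lemma card_less2:
  assumes "c \<in> A" "a j < a c"
  shows "card {x\<in>A. a c < a x} < card {x\<in>A. a j < a x}"
  by (rule psubset_card_mono) (use finA assms in auto)

lemma main:
  assumes "j \<in> A"
  shows "B j \<ge> rho j * (pp j + Z j)"
  using assms
proof (induction "card {x\<in>A. a j < a x}" arbitrary: j rule: less_induct)
  case less
  have jA: "j \<in> A" by fact
  have IH: "B c \<ge> rho c * (pp c + Z c)" if "c \<in> Ch j" for c
  proof -
    have "child j c" using that Ch_def by simp
    then have "c \<in> A" "a j < a c" using child_basic by simp_all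
    then show ?thesis using less.hyps[OF card_less2] by blast
  qed
  have rj: "rho j > 0" using rho_pos[OF jA] .
  define g where "g c = rho j * (proc c + Z c)" for c
  have Bg: "B c \<ge> g c" if "c \<in> Ch j" for c
  proof -
    have ch: "child j c" using that Ch_def by simp
    have cA: "c \<in> A" using child_basic[OF ch] by simp
    have "rho j \<le> rho c" using child_props[OF ch] rj by simp
    moreover have "proc c + Z c \<le> pp c + Z c" using proc_le_pp[OF cA] by simp
    moreover have "0 \<le> proc c + Z c" using proc_nn Z_nn by (simp add: add_nonneg_nonneg)
    ultimately have "g c \<le> rho c * (pp c + Z c)" unfolding g_def
      using rj by (intro mult_mono) simp_all
    then show ?thesis using IH[OF that] by simp
  qed
  have sumg: "(\<Sum>c\<in>Ch j. g c) = rho j * Z j"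
    unfolding g_def Z_rec[of j] by (simp add: sum_distrib_left)
  have wj: "w j = rho j * pp j" using w_eq[OF jA] .
  show ?case
  proof (cases "j \<in> F")
    case True
    have "(\<Sum>c\<in>Ch j. g c) \<le> (\<Sum>c\<in>Ch j. B c)" by (rule sum_mono) (use Bg in simp)
    then show ?thesis using B_rec[of j] True sumg wj by (simp add: sg_def algebra_simps)
  next
    case False
    have key: "(\<Sum>c\<in>Ch j. B c) \<ge> 2 * w j + rho j * Z j"
    proof (cases "\<exists>c\<in>Ch j. 4 * w j \<le> w c")
      case True
      then obtain c0 where c0: "c0 \<in> Ch j" "4 * w j \<le> w c0" by blast
      have ch: "child j c0" using c0 Ch_def by simp
      have cA: "c0 \<in> A" using child_basic[OF ch] by simp
      have r4: "4 * rho j \<le> rho c0" using child_props[OF ch] by simp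
      have "rho j * proc c0 \<le> rho j * pp c0" using proc_le_pp[OF cA] rj by simp
      also have "\<dots> \<le> (rho c0 / 4) * pp c0" using r4 pp_pos[OF cA] by (intro mult_right_mono) simp_all
      finally have a1: "rho j * proc c0 \<le> w c0 / 4" using w_eq[OF cA] by simp
      have a2: "rho j * Z c0 \<le> rho c0 * Z c0" using r4 rj Z_nn by (intro mult_right_mono) simp_all
      have "B c0 \<ge> w c0 + rho c0 * Z c0" using IH[OF c0(1)] w_eq[OF cA] by (simp add: algebra_simps)
      then have d0: "B c0 - g c0 \<ge> 2 * w j"
        unfolding g_def using a1 a2 c0(2) w_posA[OF jA] by (simp add: algebra_simps)
      have "B c0 - g c0 \<le> (\<Sum>c\<in>Ch j. B c - g c)"
        by (rule member_le_sum) (use c0 Bg Ch_fin in auto)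
      then have "2 * w j \<le> (\<Sum>c\<in>Ch j. B c) - (\<Sum>c\<in>Ch j. g c)"
        using d0 by (simp add: sum_subtractf)
      then show ?thesis using sumg by simp
    next
      case False
      have small: "B c \<ge> (4 / del) * g c" if "c \<in> Ch j" for c
      proof -
        have ch: "child j c" using that Ch_def by simp
        have cA: "c \<in> A" using child_basic[OF ch] by simp
        have "(4 / del) * rho j \<le> rho c" using child_props[OF ch] False that by auto
        moreover have "proc c + Z c \<le> pp c + Z c" using proc_le_pp[OF cA] by simp
        moreover have "0 \<le> proc c + Z c" using proc_nn Z_nn by (simp add: add_nonneg_nonneg)
        moreover have "0 \<le> (4 / del) * rho j" using rj del_pos by simp
        ultimately have "(4 / del) * rho j * (proc c + Z c) \<le> rho c * (pp c + Z c)"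
          by (intro mult_mono) simp_all
        then show ?thesis using IH[OF that] unfolding g_def by (simp add: algebra_simps)
      qed
      have "(\<Sum>c\<in>Ch j. (4 / del) * g c) \<le> (\<Sum>c\<in>Ch j. B c)" by (rule sum_mono) (use small in simp)
      moreover have "(\<Sum>c\<in>Ch j. (4 / del) * g c) = (4 / del) * (rho j * Z j)"
        by (simp only: sum_distrib_left[symmetric] sumg)
      ultimately have s1: "(4 / del) * (rho j * Z j) \<le> (\<Sum>c\<in>Ch j. B c)" by simp
      have Zd: "del * pp j \<le> Z j" using unfinished[OF jA \<open>j \<notin> F\<close>] unfolding Z_def .
      have "2 * (rho j * pp j) + rho j * Z j \<le> (4 / del) * (rho j * Z j)"
        by (rule arith_small[OF del_pos del_le Zd rj pp_pos[OF jA]])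
      then have "2 * w j + rho j * Z j \<le> (4 / del) * (rho j * Z j)" using wj by simp
      then show ?thesis using s1 by simp
    qed
    then show ?thesis using B_rec[of j] False wj by (simp add: sg_def algebra_simps)
  qed
qed

end 
context TT begin

definition roots :: "'j set" where "roots = {q\<in>A. \<not> (\<exists>j. child j q)}"

lemma has_root: "k \<in> A \<Longrightarrow> \<exists>q\<in>roots. child\<^sup>*\<^sup>* q k"
proof (induction "card {x\<in>A. a x < a k}" arbitrary: k rule: less_induct)
  case less
  show ?case
  proof (cases "k \<in> roots")
    case True then show ?thesis by blast
  next
    case False
    then obtain j where ch: "child j k" using less.prems roots_def by blast
    have jA: "j \<in> A" "a j < a k" using child_basic[OF ch] by simp_all
    obtain q where "q \<in> roots" "child\<^sup>*\<^sup>* q j" using less.hyps[OF card_less[OF jA] jA(1)] by blast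
    then show ?thesis using ch by (meson rtranclp.rtrancl_into_rtrancl)
  qed
qed

lemma sub_A: "q \<in> A \<Longrightarrow> sub q \<subseteq> A"
  unfolding sub_def using rdesc_basic by blast

lemma A_decomp: "A = (\<Union>q\<in>roots. sub q)"
proof
  show "A \<subseteq> (\<Union>q\<in>roots. sub q)" using has_root unfolding sub_def by blast
  show "(\<Union>q\<in>roots. sub q) \<subseteq> A" using sub_A roots_def by blast
qed

lemma roots_disj:
  assumes "q1 \<in> roots" "q2 \<in> roots" "q1 \<noteq> q2"
  shows "sub q1 \<inter> sub q2 = {}"
proof (rule ccontr)
  assume "sub q1 \<inter> sub q2 \<noteq> {}"
  then obtain x where x: "child\<^sup>*\<^sup>* q1 x" "child\<^sup>*\<^sup>* q2 x" unfolding sub_def by blast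
  have gen: False if d: "child\<^sup>*\<^sup>* u v" "u \<noteq> v" "v \<in> roots" for u v
  proof -
    obtain y where y: "child\<^sup>*\<^sup>* u y" "child y v"
      using d(1,2) by (cases rule: rtranclp.cases) auto
    then show False using d(3) roots_def by blast
  qed
  from comparable[OF x(2)] x(1) have "child\<^sup>*\<^sup>* q1 q2 \<or> child\<^sup>*\<^sup>* q2 q1" by blast
  then show False using gen assms by metis
qed

lemma final: "(\<Sum>j\<in>F. w j) \<ge> 1/2 * (\<Sum>j\<in>A. w j)"
proof -
  have finR: "finite roots" using finA roots_def by simp
  have "(\<Sum>k\<in>A. sg k * w k) = (\<Sum>q\<in>roots. \<Sum>k\<in>sub q. sg k * w k)"
    by (subst A_decomp, rule sum.UNION_disjoint) (use finR sub_fin roots_disj in auto)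
  also have "\<dots> = (\<Sum>q\<in>roots. B q)" unfolding B_def by simp
  also have "\<dots> \<ge> 0"
  proof (rule sum_nonneg)
    fix q assume q: "q \<in> roots"
    then have rA: "q \<in> A" using roots_def by simp
    have "0 \<le> rho q * (pp q + Z q)"
      using rho_pos[OF rA] pp_pos[OF rA] Z_nn by simp
    then show "0 \<le> B q" using main[OF rA] by simp
  qed
  finally have nn: "0 \<le> (\<Sum>k\<in>A. sg k * w k)" .
  have FA: "F \<subseteq> A" unfolding finished_jobs_def by blast
  have "(\<Sum>k\<in>A. sg k * w k) = (\<Sum>k\<in>A - F. sg k * w k) + (\<Sum>k\<in>F. sg k * w k)"
    by (rule sum.subset_diff[OF FA finA])
  also have "(\<Sum>k\<in>A - F. sg k * w k) = - (\<Sum>k\<in>A - F. w k)"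
    by (simp add: sg_def sum_negf)
  also have "(\<Sum>k\<in>F. sg k * w k) = (\<Sum>k\<in>F. w k)"
    by (rule sum.cong) (simp_all add: sg_def)
  finally have 1: "(\<Sum>k\<in>A - F. w k) \<le> (\<Sum>k\<in>F. w k)" using nn by simp
  have "(\<Sum>k\<in>A. w k) = (\<Sum>k\<in>A - F. w k) + (\<Sum>k\<in>F. w k)"
    by (rule sum.subset_diff[OF FA finA])
  then show ?thesis using 1 by simp
qed

end

theorem theorem3:
  fixes \<epsilon> :: real and m :: nat and Jobs :: "'j set"
    and elig :: "nat \<Rightarrow> 'j \<Rightarrow> bool" and p :: "nat \<Rightarrow> 'j \<Rightarrow> real"
    and w r d :: "'j \<Rightarrow> real"
    and A :: "'j set" and mach :: "'j \<Rightarrow> nat" and a :: "'j \<Rightarrow> real"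
    and S :: "nat \<Rightarrow> real \<Rightarrow> 'j option" and cons :: "real \<Rightarrow> nat \<Rightarrow> 'j option"
  assumes eps_pos: "\<epsilon> > 0"
    and fin: "finite Jobs"
    and w_pos: "\<And>j. j \<in> Jobs \<Longrightarrow> w j > 0"
    and p_pos: "\<And>i j. i < m \<Longrightarrow> j \<in> Jobs \<Longrightarrow> elig i j \<Longrightarrow> p i j > 0"
    and slack: "\<And>i j. i < m \<Longrightarrow> j \<in> Jobs \<Longrightarrow> elig i j \<Longrightarrow> d j - r j \<ge> (1 + \<epsilon>) * p i j"
    and run: "two_threshold_run \<epsilon> m Jobs elig p w r d A mach a S cons"
  shows "(\<Sum>j\<in>finished_jobs p A mach a S. w j) \<ge> 1/2 * (\<Sum>j\<in>A. w j)"
proof -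
  interpret TT S \<epsilon> m Jobs elig p w r d A mach a cons
  proof (unfold_locales)
    show "\<And>i j. {x. S i x = Some j} \<in> sets lborel" using run unfolding two_threshold_run_def by blast
  qed (use eps_pos fin w_pos p_pos run in auto)
  show ?thesis by (rule final)
qed

end
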